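(* Consider an instance of the destructive weighted-\$-protection problem. Suppose the defender succeeds by awarding a set $\mathcal{V}_F\subseteq\mathcal{V}$ with $\sum_{v_j\in\mathcal{V}_F}p_j^a\le F$. If $v_{j'}\prec v_j$, $v_{j'}\in\mathcal{V}_F$ and $v_j\notin\mathcal{V}_F$, then the defender also succeeds by awarding $(\mathcal{V}_F\setminus\{v_{j'}\})\cup\{v_j\}$.
   Context: Election model. Candidates $\mathcal{C}=\{c_1,\dots,c_m\}$, voters $\mathcal{V}=\{v_1,\dots,v_n\}$; voter $v_j$ has a preference list $\tau_j$ (a linear order of $\mathcal{C}$), weight $w_j\in\mathbb{Z}_{>0}$, awarding price $p_j^a\in\mathbb{Z}_{>0}$, bribing price $p_j^b\in\mathbb{Z}_{>0}$. A scoring rule $\alpha=(\alpha_1\ge\cdots\ge\alpha_m)$ of nonnegative integers gives the candidate at position $z$ of $v_j$'s list $w_j\alpha_z$ points; total score is the sum over voters. In the destructive weighted-\$-protection problem, $c_m$ has maximum total score without bribery; there is a defense budget $F$ and an attack budget $B$. Given awarded voters $\mathcal{V}_F$, the attacker may choose $\mathcal{V}_B\subseteq\mathcal{V}\setminus\mathcal{V}_F$ with $\sum_{v_j\in\mathcal{V}_B}p_j^b\le B$ and replace each list in $\mathcal{V}_B$ by an arbitrary list; the defender succeeds with $\mathcal{V}_F$ (of total awarding price at most $F$) if no such bribery makes some $c\neq c_m$ obtain a strictly higher total score than $c_m$. Dominance: $v_{j'}\prec v_j$ if either (i) $\tau_j=\tau_{j'}$, $w_j\ge w_{j'}$, $p_j^a\le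 p_{j'}^a$, $p_j^b\le p_{j'}^b$ with at least one of these three inequalities strict; or (ii) $\tau_j=\tau_{j'}$, $w_j=w_{j'}$, $p_j^a=p_{j'}^a$, $p_j^b=p_{j'}^b$ and $j'<j$. *)

theory Defs
  imports Main
begin

text \<open>Voters are indexed by natural numbers j < n; candidates are elements of a
finite set C of an arbitrary type; d is the distinguished candidate c_m.
A preference list is a list of all candidates without repetition (first = best).
The scoring vector alpha is a list of length |C|, nonincreasing; the candidate at
(0-based) position z of a list gets alpha ! z points per unit weight.\<close>

definition is_pref_list :: "'c set \<Rightarrow> 'c list \<Rightarrow> bool" where
  "is_pref_list C l \<longleftrightarrow> distinct l \<and> set l = C"

definition score :: "nat list \<Rightarrow> (nat \<Rightarrow> nat) \<Rightarrow> nat \<Rightarrow> (nat \<Rightarrow> 'c list) \<Rightarrow> 'c \<Rightarrow> nat" where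
  "score \<alpha> w n P c =
     (\<Sum>j<n. w j * (\<Sum>z<length (P j). if P j ! z = c then \<alpha> ! z else 0))"

definition valid_instance ::
  "'c set \<Rightarrow> nat list \<Rightarrow> nat \<Rightarrow> (nat \<Rightarrow> 'c list) \<Rightarrow> (nat \<Rightarrow> nat) \<Rightarrow> (nat \<Rightarrow> nat)
    \<Rightarrow> (nat \<Rightarrow> nat) \<Rightarrow> 'c \<Rightarrow> bool" where
  "valid_instance C \<alpha> n \<tau> w pa pb d \<longleftrightarrow>
     finite C \<and> d \<in> C \<and> length \<alpha> = card C \<and> sorted_wrt (\<ge>) \<alpha> \<and>
     (\<forall>j<n. is_pref_list C (\<tau> j) \<and> w j > 0 \<and> pa j > 0 \<and> pb j > 0) \<and>
     (\<forall>c\<in>C. score \<alpha> w n \<tau> c \<le> score \<alpha> w n \<tau> d)"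

definition valid_bribery ::
  "'c set \<Rightarrow> nat \<Rightarrow> (nat \<Rightarrow> 'c list) \<Rightarrow> (nat \<Rightarrow> nat) \<Rightarrow> nat \<Rightarrow> nat set
    \<Rightarrow> nat set \<Rightarrow> (nat \<Rightarrow> 'c list) \<Rightarrow> bool" where
  "valid_bribery C n \<tau> pb B VF VB P \<longleftrightarrow>
     VB \<subseteq> {..<n} - VF \<and> (\<Sum>j\<in>VB. pb j) \<le> B \<and>
     (\<forall>j\<in>VB. is_pref_list C (P j)) \<and> (\<forall>j. j \<notin> VB \<longrightarrow> P j = \<tau> j)"

definition defender_succeeds ::
  "'c set \<Rightarrow> nat list \<Rightarrow> nat \<Rightarrow> (nat \<Rightarrow> 'c list) \<Rightarrow> (nat \<Rightarrow> nat) \<Rightarrow> (nat \<Rightarrow> nat)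
    \<Rightarrow> (nat \<Rightarrow> nat) \<Rightarrow> 'c \<Rightarrow> nat \<Rightarrow> nat \<Rightarrow> nat set \<Rightarrow> bool" where
  "defender_succeeds C \<alpha> n \<tau> w pa pb d F B VF \<longleftrightarrow>
     VF \<subseteq> {..<n} \<and> (\<Sum>j\<in>VF. pa j) \<le> F \<and>
     (\<forall>VB P. valid_bribery C n \<tau> pb B VF VB P \<longrightarrow>
        \<not> (\<exists>c\<in>C. c \<noteq> d \<and> score \<alpha> w n P c > score \<alpha> w n P d))"

text \<open>dominated tau w pa pb j' j  means  v_j' \<prec> v_j.\<close>
definition dominated ::
  "(nat \<Rightarrow> 'c list) \<Rightarrow> (nat \<Rightarrow> nat) \<Rightarrow> (nat \<Rightarrow> nat) \<Rightarrow> (nat \<Rightarrow> nat) \<Rightarrow> nat \<Rightarrow> nat \<Rightarrow> bool" where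
  "dominated \<tau> w pa pb j' j \<longleftrightarrow>
     (\<tau> j = \<tau> j' \<and> w j \<ge> w j' \<and> pa j \<le> pa j' \<and> pb j \<le> pb j' \<and>
        (w j > w j' \<or> pa j < pa j' \<or> pb j < pb j')) \<or>
     (\<tau> j = \<tau> j' \<and> w j = w j' \<and> pa j = pa j' \<and> pb j = pb j' \<and> j' < j)"

end

theory Submission
  imports Defs
begin

definition sc :: "nat list \<Rightarrow> 'c list \<Rightarrow> 'c \<Rightarrow> int" where
  "sc \<alpha> l c = int (\<Sum>z<length l. if l ! z = c then \<alpha> ! z else 0)"

lemma score_int: "int (score \<alpha> w n P c) = (\<Sum>j<n. int (w j) * sc \<alpha> (P j) c)"
  unfolding score_def sc_def by (simp add: of_nat_sum)

lemma score_upd: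
  assumes "k < n"
  shows "int (score \<alpha> w n (P(k := l)) c) = int (score \<alpha> w n P c) - int (w k) * sc \<alpha> (P k) c + int (w k) * sc \<alpha> l c"
proof -
  have "finite {..<n}" "k \<in> {..<n}" using assms by auto
  have A: "(\<Sum>j<n. int (w j) * sc \<alpha> ((P(k := l)) j) c) = int (w k) * sc \<alpha> l c + (\<Sum>j\<in>{..<n} - {k}. int (w j) * sc \<alpha> (P j) c)"
    using sum.remove[OF \<open>finite {..<n}\<close> \<open>k \<in> {..<n}\<close>, of "\<lambda>j. int (w j) * sc \<alpha> ((P(k := l)) j) c"]
      sum.cong[of "{..<n} - {k}" "{..<n} - {k}" "\<lambda>j. int (w j) * sc \<alpha> ((P(k := l)) j) c" "\<lambda>j. int (w j) * sc \<alpha> (P j) c"]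
    by simp
  have B: "(\<Sum>j<n. int (w j) * sc \<alpha> (P j) c) = int (w k) * sc \<alpha> (P k) c + (\<Sum>j\<in>{..<n} - {k}. int (w j) * sc \<alpha> (P j) c)"
    using sum.remove[OF \<open>finite {..<n}\<close> \<open>k \<in> {..<n}\<close>] by simp
  show ?thesis unfolding score_int using A B by simp
qed

theorem lemma6:
  fixes C :: "'c set" and \<alpha> :: "nat list" and n :: nat and \<tau> :: "nat \<Rightarrow> 'c list"
    and w pa pb :: "nat \<Rightarrow> nat" and d :: 'c and F B :: nat and VF :: "nat set"
    and j j' :: nat
  assumes "valid_instance C \<alpha> n \<tau> w pa pb d"
    and ds: "defender_succeeds C \<alpha> n \<tau> w pa pb d F B VF"
    and "j < n" and "j' < n"
    and dom: "dominated \<tau> w pa pb j' j"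
    and "j' \<in> VF" and "j \<notin> VF"
  shows "defender_succeeds C \<alpha> n \<tau> w pa pb d F B ((VF - {j'}) \<union> {j})"
proof -
  have dj: "\<tau> j = \<tau> j'" "w j' \<le> w j" "pa j \<le> pa j'" "pb j \<le> pb j'" "j \<noteq> j'"
    using dom unfolding dominated_def by auto
  have VF: "VF \<subseteq> {..<n}" "sum pa VF \<le> F" using ds unfolding defender_succeeds_def by auto
  have fin: "finite VF" using VF finite_subset by blast
  have nowin: "\<And>VB P c. valid_bribery C n \<tau> pb B VF VB P \<Longrightarrow> c \<in> C \<Longrightarrow> c \<noteq> d \<Longrightarrow>
      \<not> score \<alpha> w n P c > score \<alpha> w n P d"
    using ds unfolding defender_succeeds_def by blast
  have "sum pa ((VF - {j'}) \<union> {j}) = pa j + sum pa (VF - {j'})"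
    using fin \<open>j \<notin> VF\<close> by simp
  also have "sum pa VF = pa j' + sum pa (VF - {j'})"
    using sum.remove[OF fin \<open>j' \<in> VF\<close>] .
  ultimately have cost: "sum pa ((VF - {j'}) \<union> {j}) \<le> F" using VF dj by linarith
  have sub: "(VF - {j'}) \<union> {j} \<subseteq> {..<n}" using VF \<open>j < n\<close> by auto
  have "\<not> (\<exists>c\<in>C. c \<noteq> d \<and> score \<alpha> w n P c > score \<alpha> w n P d)"
    if vb: "valid_bribery C n \<tau> pb B ((VF - {j'}) \<union> {j}) VB P" for VB P
  proof
    assume "\<exists>c\<in>C. c \<noteq> d \<and> score \<alpha> w n P c > score \<alpha> w n P d"
    then obtain c where c: "c \<in> C" "c \<noteq> d" "score \<alpha> w n P c > score \<alpha> w n P d" by blast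
    have VB: "VB \<subseteq> {..<n} - ((VF - {j'}) \<union> {j})" "sum pb VB \<le> B"
      "\<forall>k\<in>VB. is_pref_list C (P k)" "\<forall>k. k \<notin> VB \<longrightarrow> P k = \<tau> k"
      using vb unfolding valid_bribery_def by auto
    have finVB: "finite VB" using VB(1) finite_subset by blast
    show False
    proof (cases "j' \<in> VB")
      case False
      have "valid_bribery C n \<tau> pb B VF VB P"
        using VB False unfolding valid_bribery_def by auto
      then show False using nowin[OF _ c(1) c(2)] c(3) by blast
    next
      case True
      note j'VB = True
      have jVB: "j \<notin> VB" using VB by auto
      have Pj: "P j = \<tau> j" using VB jVB by auto
      define P1 where "P1 = P(j' := \<tau> j')"
      define P2 where "P2 = P1(j := P j')"
      define D where "D = (\<lambda>Q. int (score \<alpha> w n Q c) - int (score \<alpha> w n Q d))"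
      define a where "a = sc \<alpha> (P j') c - sc \<alpha> (P j') d"
      define t where "t = sc \<alpha> (\<tau> j) c - sc \<alpha> (\<tau> j) d"
      have D0: "D P > 0" using c(3) unfolding D_def by simp
      have D1: "D P1 = D P - int (w j') * (a - t)"
        unfolding D_def P1_def a_def t_def using score_upd[OF \<open>j' < n\<close>, of \<alpha> w P "\<tau> j'" c] score_upd[OF \<open>j' < n\<close>, of \<alpha> w P "\<tau> j'" d] dj(1)
        by (simp add: algebra_simps)
      have P1j: "P1 j = \<tau> j" using Pj dj unfolding P1_def by simp
      have D2: "D P2 = D P1 - int (w j) * t + int (w j) * a"
        unfolding D_def P2_def a_def t_def using score_upd[OF \<open>j < n\<close>, of \<alpha> w P1 "P j'" c] score_upd[OF \<open>j < n\<close>, of \<alpha> w P1 "P j'" d] P1j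
        by (simp add: algebra_simps)
      show False
      proof (cases "a - t \<ge> 0")
        case True
        have "int (w j') * (a - t) \<le> int (w j) * (a - t)"
          using True dj(2) by (simp add: mult_right_mono)
        then have "D P2 > 0" using D0 D1 D2 by (simp add: algebra_simps)
        then have sc2: "score \<alpha> w n P2 c > score \<alpha> w n P2 d" unfolding D_def by simp
        have "sum pb (insert j (VB - {j'})) = pb j + sum pb (VB - {j'})"
          using finVB jVB by simp
        moreover have "sum pb VB = pb j' + sum pb (VB - {j'})"
          using sum.remove[OF finVB j'VB] .
        ultimately have "sum pb (insert j (VB - {j'})) \<le> B" using VB(2) dj(4) by linarith
        moreover have "insert j (VB - {j'}) \<subseteq> {..<n} - VF"
          using VB(1) \<open>j < n\<close> \<open>j \<notin> VF\<close> by auto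
        moreover have "\<forall>k\<in>insert j (VB - {j'}). is_pref_list C (P2 k)"
          using VB(3) j'VB unfolding P2_def P1_def by auto
        moreover have "\<forall>k. k \<notin> insert j (VB - {j'}) \<longrightarrow> P2 k = \<tau> k"
          using VB(4) unfolding P2_def P1_def by auto
        ultimately have "valid_bribery C n \<tau> pb B VF (insert j (VB - {j'})) P2"
          unfolding valid_bribery_def by blast
        then show False using nowin[OF _ c(1) c(2)] sc2 by blast
      next
        case False
        have "int (w j') * (a - t) \<le> 0"
          using False by (simp add: mult_nonneg_nonpos)
        then have "D P1 > 0" using D0 D1 by simp
        then have sc1: "score \<alpha> w n P1 c > score \<alpha> w n P1 d" unfolding D_def by simp
        have "sum pb (VB - {j'}) \<le> sum pb VB" using finVB by (simp add: sum_mono2)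
        then have "valid_bribery C n \<tau> pb B VF (VB - {j'}) P1"
        proof -
          have "VB - {j'} \<subseteq> {..<n} - VF" using VB(1) by auto
          moreover have "\<forall>k\<in>VB - {j'}. is_pref_list C (P1 k)" using VB(3) unfolding P1_def by simp
          moreover have "\<forall>k. k \<notin> VB - {j'} \<longrightarrow> P1 k = \<tau> k" using VB(4) unfolding P1_def by simp
          ultimately show ?thesis using VB(2) \<open>sum pb (VB - {j'}) \<le> sum pb VB\<close>
            unfolding valid_bribery_def using le_trans by blast
        qed
        then show False using nowin[OF _ c(1) c(2)] sc1 by blast
      qed
    qed
  qed
  then show ?thesis unfolding defender_succeeds_def using cost sub by blast
qed

end
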